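(* Let $\|\cdot\|_A$ and $\|\cdot\|_P$ be norms on $\mathbb{R}^n$ such that $\|\cdot\|_A$ is decomposable and $\|\cdot\|_P$ is $\gamma$-decomposable with respect to $\mathcal{G}$ for some $\gamma\in(0,1]$. Let $a,b,c,d$ be the constants defined below, let $f>0$ be a constant such that for every $h\in\mathbb{R}^n$, every $\Lambda_0\in\mathrm{GkS}$ and every optimal group $k$-sparse decomposition $\Lambda_1,\ldots,\Lambda_s$ of $h_{\mathcal{N}\setminus\Lambda_0}$ with respect to $\|\cdot\|_A$ one has $\sum_{j=2}^s\|h_{\Lambda_j}\|_2\le\frac1f\|h_{\mathcal{N}\setminus\Lambda_0}\|_A$, and put $r=b/(a\gamma)$. Let $A\in\mathbb{R}^{m\times n}$ satisfy the group restricted isometry property (GRIP) of order $2k$ with constant $\delta_{2k}\in(0,1)$, and assume the compressibility condition $$\delta_{2k}<\frac{f}{f+\sqrt2\,rd}.$$ Let $x\in\mathbb{R}^n$, $\eta\in\mathbb{R}^m$ with $\|\eta\|_2\le\epsilon$, $y=Ax+\eta$, and let $\hat x$ be a minimizer of $\|z\|_P$ over $z\in\mathbb{R}^n$ subject to $\|y-Az\|_2\le\epsilon$. Then, writing $\sigma=\sigma_{k,\mathcal{G}}(x,\|\cdot\|_A)$, $$\|\hat x-x\|_2\le D_1\sigma+D_2\epsilon,\qquad \|\hat x-x\|_A\le D_3\sigma+D_4\epsilon,$$ where, with $\Delta=1-(1+\sqrt2\,rd/f)\delta_{2k}$, $$D_1=\frac{r(1+\gamma)}{f}\cdot\frac{1+(\sqrt2-1)\delta_{2k}}{\Delta},\qquad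 D_2=2(1+rd/f)\frac{\sqrt{1+\delta_{2k}}}{\Delta},$$ $$D_3=r(1+\gamma)\cdot\frac{1+(\sqrt2\,d/f-1)\delta_{2k}}{\Delta},\qquad D_4=2d(1+r)\frac{\sqrt{1+\delta_{2k}}}{\Delta}.$$
   Context: Fix positive integers $n,k$, $\mathcal{N}=\{1,\ldots,n\}$, and a partition $\mathcal{G}=\{G_1,\ldots,G_g\}$ of $\mathcal{N}$ with $|G_i|\le k$. For $x\in\mathbb{R}^n$, $\Lambda\subseteq\mathcal{N}$: $(x_\Lambda)_i=x_i$ if $i\in\Lambda$, else $0$; $\mathrm{supp}(u)=\{i:u_i\ne0\}$; $G_S=\bigcup_{i\in S}G_i$ for $S\subseteq\{1,\ldots,g\}$. For an integer $t$, $\Lambda$ is group $t$-sparse if $\Lambda=G_S$ for some $S$ and $|\Lambda|\le t$; $\mathrm{GkS}$ is the collection of group $k$-sparse sets. A norm $\|\cdot\|$ is $\gamma$-decomposable w.r.t. $\mathcal{G}$ ($\gamma\in(0,1]$) if $\|u+v\|\ge\|u\|+\gamma\|v\|$ whenever $\mathrm{supp}(u)\subseteq G_{S_u}$, $\mathrm{supp}(v)\subseteq G_{S_v}$ with $S_u\cap S_v=\emptyset$; decomposable means $1$-decomposable (equivalently equality $\|u+v\|=\|u\|+\|v\|$ for such $u,v$). Group $k$-sparsity index: $\sigma_{k,\mathcal{G}}(x,\|\cdot\|)=\min_{\Lambda\in\mathrm{GkS}}\|x-x_\Lambda\|$. Constants (minima/maxima over $\Lambda\in\mathrm{GkS}$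 and $x$ with $x_\Lambda\ne0$): $a=\min\|x_\Lambda\|_P/\|x_\Lambda\|_A$, $b=\max\|x_\Lambda\|_P/\|x_\Lambda\|_A$, $c=\min\|x_\Lambda\|_A/\|x_\Lambda\|_2$, $d=\max\|x_\Lambda\|_A/\|x_\Lambda\|_2$. $A$ satisfies GRIP of order $2k$ with constant $\delta_{2k}\in(0,1)$ if $(1-\delta_{2k})\|z\|_2^2\le\|Az\|_2^2\le(1+\delta_{2k})\|z\|_2^2$ for every $z$ whose support is contained in some group $2k$-sparse set. Optimal group $k$-sparse decomposition of $v=h_{\mathcal{N}\setminus\Lambda_0}$ ($\Lambda_0\in\mathrm{GkS}$) w.r.t. $\|\cdot\|_A$: pairwise disjoint group $k$-sparse sets $\Lambda_1,\ldots,\Lambda_s\subseteq\mathcal{N}\setminus\Lambda_0$ with union $\mathcal{N}\setminus\Lambda_0$, such that for each $i$, with $r_i=v-\sum_{j<i}v_{\Lambda_j}$, $\Lambda_i$ minimizes $\|r_i-(r_i)_\Lambda\|_A$ over group $k$-sparse $\Lambda\subseteq\mathcal{N}\setminus(\Lambda_0\cup\cdots\cup\Lambda_{i-1})$. *)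

theory Defs
  imports "HOL-Analysis.Analysis" "HOL-Library.Disjoint_Sets"
begin

text \<open>Vectors of R^n are modelled as real^'n for a finite index type 'n
 (so N = UNIV :: 'n set); matrices A in R^(m x n) as real^'n^'m.
 The partition G = {G_1,...,G_g} is a set of sets of indices.\<close>

definition is_norm :: "(real^'n \<Rightarrow> real) \<Rightarrow> bool" where
  "is_norm N \<longleftrightarrow> (\<forall>x. 0 \<le> N x) \<and> (\<forall>x. N x = 0 \<longleftrightarrow> x = 0) \<and>
     (\<forall>c x. N (c *\<^sub>R x) = \<bar>c\<bar> * N x) \<and> (\<forall>x y. N (x + y) \<le> N x + N y)"

definition restr :: "real^'n \<Rightarrow> 'n set \<Rightarrow> real^'n" where
  "restr x L = (\<chi> i. if i \<in> L then x $ i else 0)"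

definition supp :: "real^'n \<Rightarrow> 'n set" where
  "supp u = {i. u $ i \<noteq> 0}"

definition group_sparse :: "'n set set \<Rightarrow> nat \<Rightarrow> 'n set \<Rightarrow> bool" where
  "group_sparse G t L \<longleftrightarrow> (\<exists>S\<subseteq>G. L = \<Union>S) \<and> card L \<le> t"

definition gamma_decomposable :: "'n set set \<Rightarrow> real \<Rightarrow> (real^'n \<Rightarrow> real) \<Rightarrow> bool" where
  "gamma_decomposable G \<gamma> N \<longleftrightarrow>
     (\<forall>u v Su Sv. Su \<subseteq> G \<and> Sv \<subseteq> G \<and> Su \<inter> Sv = {} \<and> supp u \<subseteq> \<Union>Su \<and> supp v \<subseteq> \<Union>Sv
        \<longrightarrow> N (u + v) \<ge> N u + \<gamma> * N v)"

definition decomposable :: "'n set set \<Rightarrow> (real^'n \<Rightarrow> real) \<Rightarrow> bool" where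
  "decomposable G N \<longleftrightarrow> gamma_decomposable G 1 N"

definition sparsity_index :: "'n::finite set set \<Rightarrow> nat \<Rightarrow> real^'n \<Rightarrow> (real^'n \<Rightarrow> real) \<Rightarrow> real" where
  "sparsity_index G k x N = Min ((\<lambda>L. N (x - restr x L)) ` {L. group_sparse G k L})"

text \<open>The set of ratios |x_L|_1 / |x_L|_2 over group k-sparse L and x with x_L nonzero;
  the paper's constants a,b,c,d are its minimum/maximum (attained), written as Inf/Sup.\<close>
definition ratios :: "'n set set \<Rightarrow> nat \<Rightarrow> (real^'n \<Rightarrow> real) \<Rightarrow> (real^'n \<Rightarrow> real) \<Rightarrow> real set" where
  "ratios G k N1 N2 = {N1 (restr x L) / N2 (restr x L) | x L. group_sparse G k L \<and> restr x L \<noteq> 0}"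

definition const_a :: "'n set set \<Rightarrow> nat \<Rightarrow> (real^'n \<Rightarrow> real) \<Rightarrow> (real^'n \<Rightarrow> real) \<Rightarrow> real" where
  "const_a G k NA NP = Inf (ratios G k NP NA)"
definition const_b :: "'n set set \<Rightarrow> nat \<Rightarrow> (real^'n \<Rightarrow> real) \<Rightarrow> (real^'n \<Rightarrow> real) \<Rightarrow> real" where
  "const_b G k NA NP = Sup (ratios G k NP NA)"
definition const_c :: "'n set set \<Rightarrow> nat \<Rightarrow> (real^'n \<Rightarrow> real) \<Rightarrow> real" where
  "const_c G k NA = Inf (ratios G k NA norm)"
definition const_d :: "'n set set \<Rightarrow> nat \<Rightarrow> (real^'n \<Rightarrow> real) \<Rightarrow> real" where
  "const_d G k NA = Sup (ratios G k NA norm)"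

definition GRIP :: "'n set set \<Rightarrow> nat \<Rightarrow> real^'n^'m \<Rightarrow> real \<Rightarrow> bool" where
  "GRIP G t A \<delta> \<longleftrightarrow> (\<forall>z. (\<exists>L. group_sparse G t L \<and> supp z \<subseteq> L) \<longrightarrow>
      (1 - \<delta>) * (norm z)\<^sup>2 \<le> (norm (A *v z))\<^sup>2 \<and> (norm (A *v z))\<^sup>2 \<le> (1 + \<delta>) * (norm z)\<^sup>2)"

text \<open>Optimal group k-sparse decomposition Ls = [Lambda_1,...,Lambda_s] of v = h restricted to
 N minus Lambda_0, w.r.t. the norm NA (list index i corresponds to Lambda_(i+1)).\<close>
definition optimal_decomposition ::
  "'n set set \<Rightarrow> nat \<Rightarrow> (real^'n \<Rightarrow> real) \<Rightarrow> real^'n \<Rightarrow> 'n set \<Rightarrow> 'n set list \<Rightarrow> bool" where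
  "optimal_decomposition G k NA h L0 Ls \<longleftrightarrow>
     (let v = restr h (- L0) in
      (\<forall>i<length Ls. group_sparse G k (Ls ! i) \<and> Ls ! i \<subseteq> - L0) \<and>
      (\<forall>i<length Ls. \<forall>j<length Ls. i \<noteq> j \<longrightarrow> Ls ! i \<inter> Ls ! j = {}) \<and>
      \<Union>(set Ls) = - L0 \<and>
      (\<forall>i<length Ls.
         let r = v - (\<Sum>j<i. restr v (Ls ! j)) in
         (\<forall>L. group_sparse G k L \<and> L \<subseteq> - (L0 \<union> (\<Union>j<i. Ls ! j)) \<longrightarrow>
              NA (r - restr r (Ls ! i)) \<le> NA (r - restr r L))))"

end

theory Submission
  imports Defs
begin


lemma restr_nth[simp]: "restr x L $ i = (if i \<in> L then x $ i else 0)"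
  by (simp add: restr_def)

lemma restr_add: "restr (x + y) L = restr x L + restr y L"
  by (simp add: vec_eq_iff)
lemma restr_diff: "restr (x - y) L = restr x L - restr y L"
  by (simp add: vec_eq_iff)
lemma restr_restr[simp]: "restr (restr x A) B = restr x (A \<inter> B)"
  by (simp add: vec_eq_iff)
lemma restr_compl: "x - restr x L = restr x (- L)"
  by (simp add: vec_eq_iff)
lemma restr_split: "restr x L + restr x (- L) = x"
  by (simp add: vec_eq_iff)
lemma restr_UNIV[simp]: "restr x UNIV = x"
  by (simp add: vec_eq_iff)
lemma restr_empty[simp]: "restr x {} = 0"
  by (simp add: vec_eq_iff)
lemma restr_zero[simp]: "restr 0 L = 0"
  by (simp add: vec_eq_iff)
lemma supp_restr: "supp (restr x L) \<subseteq> L"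
  by (auto simp: supp_def)
lemma supp_restr_eq: "supp x \<subseteq> L \<Longrightarrow> restr x L = x"
  by (auto simp: supp_def vec_eq_iff)
lemma restr_union_disj: "A \<inter> B = {} \<Longrightarrow> restr x (A \<union> B) = restr x A + restr x B"
  by (auto simp: vec_eq_iff)
lemma restr_sum_fun: "restr (\<Sum>j\<in>J. w j) L = (\<Sum>j\<in>J. restr (w j) L)"
  by (induction J rule: infinite_finite_induct) (auto simp: restr_add)

lemma restr_sum_disj:
  assumes "finite J" "\<And>i j. i \<in> J \<Longrightarrow> j \<in> J \<Longrightarrow> i \<noteq> j \<Longrightarrow> P i \<inter> P j = {}"
  shows "(\<Sum>j\<in>J. restr x (P j)) = restr x (\<Union>j\<in>J. P j)"
  using assms
proof (induction J rule: finite_induct)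
  case (insert a J)
  have "(\<Union>j\<in>J. P j) \<inter> P a = {}" using insert.prems insert.hyps by blast
  then show ?case using insert by (simp add: restr_union_disj Int_commute)
qed simp

lemma inner_disj: "A \<inter> B = {} \<Longrightarrow> supp u \<subseteq> A \<Longrightarrow> supp v \<subseteq> B \<Longrightarrow> u \<bullet> v = 0"
  unfolding inner_vec_def supp_def
  by (rule sum.neutral) auto

lemma norm_disj_sq: "A \<inter> B = {} \<Longrightarrow> supp u \<subseteq> A \<Longrightarrow> supp v \<subseteq> B \<Longrightarrow>
   (norm (u + v))\<^sup>2 = (norm u)\<^sup>2 + (norm v)\<^sup>2"
  by (rule norm_add_Pythagorean) (simp add: orthogonal_def inner_disj)

lemma norm_restr_le: "norm (restr x L) \<le> norm x"
proof -
  have "(norm x)\<^sup>2 = (norm (restr x L))\<^sup>2 + (norm (restr x (-L)))\<^sup>2"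
    using norm_disj_sq[of L "-L" "restr x L" "restr x (-L)", OF _ supp_restr supp_restr]
    by (simp add: restr_split)
  then show ?thesis by (metis abs_norm_cancel abs_le_square_iff le_add_same_cancel1 zero_le_power2)
qed

section \<open>Norm facts\<close>

lemma is_normD:
  assumes "is_norm N"
  shows "N x \<ge> 0" "N x = 0 \<longleftrightarrow> x = 0" "N (c *\<^sub>R x) = \<bar>c\<bar> * N x" "N (x + y) \<le> N x + N y"
  using assms unfolding is_norm_def by blast+

lemma norm_zero': "is_norm N \<Longrightarrow> N 0 = 0"
  using is_normD(2) by blast

lemma norm_minus': "is_norm N \<Longrightarrow> N (- x) = N x"
  using is_normD(3)[of N "-1" x] by simp

lemma norm_diff_ge: "is_norm N \<Longrightarrow> N (x + y) \<ge> N x - N y"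
  using is_normD(4)[of N "x + y" "- y"] norm_minus'[of N y] by simp

lemma norm_diff_ge2: "is_norm N \<Longrightarrow> N (x + y) \<ge> N y - N x"
  using norm_diff_ge[of N y x] by (simp add: add.commute)

lemma norm_sum': "is_norm N \<Longrightarrow> N (\<Sum>j\<in>J. w j) \<le> (\<Sum>j\<in>J. N (w j))"
proof (induction J rule: infinite_finite_induct)
  case (insert a J)
  then show ?case using is_normD(4)[of N "w a" "sum w J"] by simp
qed (auto simp: norm_zero')

lemma norm_upper:
  assumes "is_norm N"
  shows "\<exists>C\<ge>0. \<forall>x. N x \<le> C * norm x"
proof -
  define C where "C = (\<Sum>i\<in>UNIV. N (axis i 1))"
  have C0: "C \<ge> 0" unfolding C_def using is_normD(1)[OF assms] by (simp add: sum_nonneg)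
  have "N x \<le> C * norm x" for x
  proof -
    have "x = (\<Sum>i\<in>UNIV. x $ i *\<^sub>R axis i 1)"
      by (simp add: vec_eq_iff axis_def sum.If_cases if_distrib cong: if_cong)
    then have "N x \<le> (\<Sum>i\<in>UNIV. N (x $ i *\<^sub>R axis i 1))"
      by (metis norm_sum'[OF assms])
    also have "\<dots> = (\<Sum>i\<in>UNIV. \<bar>x $ i\<bar> * N (axis i 1))"
      using is_normD(3)[OF assms] by simp
    also have "\<dots> \<le> (\<Sum>i\<in>UNIV. norm x * N (axis i 1))"
      by (rule sum_mono, rule mult_right_mono) (auto simp: component_le_norm_cart is_normD(1)[OF assms])
    also have "\<dots> = C * norm x" by (simp add: C_def sum_distrib_left mult.commute)
    finally show ?thesis .
  qed
  then show ?thesis using C0 by blast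
qed

lemma norm_lower:
  assumes "is_norm N"
  shows "\<exists>c>0. \<forall>x. c * norm x \<le> N x"
proof -
  obtain C where C: "C \<ge> 0" "\<And>x. N x \<le> C * norm x" using norm_upper[OF assms] by blast
  have cont: "continuous_on S N" for S
  proof (rule continuous_on_subset[of UNIV], rule continuous_on_iff[THEN iffD2], intro ballI allI impI)
    fix x and e :: real assume "e > 0"
    show "\<exists>d>0. \<forall>x'\<in>UNIV. dist x' x < d \<longrightarrow> dist (N x') (N x) < e"
    proof (intro exI[of _ "e / (C + 1)"] conjI ballI impI)
      show "e / (C + 1) > 0" using \<open>e > 0\<close> C by simp
      fix x' assume "dist x' x < e / (C + 1)"
      have "\<bar>N x' - N x\<bar> \<le> N (x' - x)"
        using norm_diff_ge[OF assms, of x' "x - x'"] norm_diff_ge[OF assms, of x "x' - x"]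
          norm_minus'[OF assms, of "x - x'"] by (auto simp: abs_le_iff)
      also have "\<dots> \<le> C * norm (x' - x)" by (rule C)
      also have "\<dots> \<le> (C + 1) * norm (x' - x)" by (simp add: mult_right_mono)
      also have "\<dots> < e" using \<open>dist x' x < _\<close> C by (simp add: dist_norm field_simps)
      finally show "dist (N x') (N x) < e" by (simp add: dist_real_def)
    qed
  qed simp
  obtain i :: 'a where True by blast
  have ne: "{x :: real^'a. norm x = 1} \<noteq> {}"
    using norm_axis_1[of i] by blast
  have cpt: "compact {x :: real^'a. norm x = 1}"
    using compact_sphere[of 0 1] by (simp add: sphere_def dist_norm)
  obtain x0 where x0: "norm x0 = 1" "\<And>y. norm y = 1 \<Longrightarrow> N x0 \<le> N y"
    using continuous_attains_inf[OF cpt ne cont] by auto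
  have pos: "N x0 > 0" using x0(1) is_normD(1,2)[OF assms, of x0] by force
  have "N x0 * norm y \<le> N y" for y
  proof (cases "y = 0")
    case True then show ?thesis by (simp add: norm_zero'[OF assms])
  next
    case False
    have "N x0 \<le> N ((1 / norm y) *\<^sub>R y)" using x0(2) False by simp
    also have "\<dots> = N y / norm y" using is_normD(3)[OF assms] by simp
    finally show ?thesis using False by (simp add: field_simps)
  qed
  then show ?thesis using pos by blast
qed



definition gunion :: "'n set set \<Rightarrow> 'n set \<Rightarrow> bool" where
  "gunion G L \<longleftrightarrow> (\<exists>S\<subseteq>G. L = \<Union>S)"

lemma gs_gunion: "group_sparse G k L \<Longrightarrow> gunion G L"
  by (simp add: group_sparse_def gunion_def)

lemma gunion_Un: "gunion G A \<Longrightarrow> gunion G B \<Longrightarrow> gunion G (A \<union> B)"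
  unfolding gunion_def by (metis Union_Un_distrib le_sup_iff)

lemma gunion_empty: "gunion G {}"
  unfolding gunion_def by auto

lemma gunion_compl:
  assumes part: "partition_on UNIV G" and "gunion G A"
  shows "gunion G (- A)"
proof -
  obtain S where S: "S \<subseteq> G" "A = \<Union>S" using assms(2) by (auto simp: gunion_def)
  have "- A = \<Union>(G - S)"
  proof
    show "- A \<subseteq> \<Union>(G - S)"
    proof
      fix i assume "i \<in> - A"
      have "i \<in> \<Union>G" using part by (simp add: partition_on_def)
      then obtain g where g: "g \<in> G" "i \<in> g" by blast
      have "g \<notin> S" using g \<open>i \<in> -A\<close> S by auto
      then show "i \<in> \<Union>(G - S)" using g by auto
    qed
    show "\<Union>(G - S) \<subseteq> - A"
    proof
      fix i assume "i \<in> \<Union>(G - S)"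
      then obtain g where g: "g \<in> G" "g \<notin> S" "i \<in> g" by auto
      have "i \<notin> h" if "h \<in> S" for h
      proof
        assume "i \<in> h"
        have dj: "\<forall>a\<in>G. \<forall>b\<in>G. a \<noteq> b \<longrightarrow> a \<inter> b = {}" using part by (simp add: partition_on_def disjoint_def)
        have "h \<in> G" using that S(1) by blast
        then have "g = h" using dj g \<open>i \<in> h\<close> by blast
        then show False using g that by simp
      qed
      then show "i \<in> - A" using S by auto
    qed
  qed
  then show ?thesis unfolding gunion_def by blast
qed

lemma gunion_UN: "finite J \<Longrightarrow> (\<And>j. j \<in> J \<Longrightarrow> gunion G (P j)) \<Longrightarrow> gunion G (\<Union>j\<in>J. P j)"
  by (induction J rule: finite_induct) (auto simp: gunion_empty gunion_Un)

lemma gunion_group: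
  assumes part: "partition_on UNIV G" and "gunion G R" "i \<in> R"
  shows "\<exists>g\<in>G. i \<in> g \<and> g \<subseteq> R"
proof -
  obtain S where S: "S \<subseteq> G" "R = \<Union>S" using assms(2) by (auto simp: gunion_def)
  then show ?thesis using assms(3) by blast
qed

lemma group_is_sparse: "\<forall>g\<in>G. card g \<le> k \<Longrightarrow> g \<in> G \<Longrightarrow> group_sparse G k g"
  unfolding group_sparse_def by (intro conjI exI[of _ "{g}"]) auto

lemma dec_pair:
  assumes part: "partition_on UNIV G" and dec: "gamma_decomposable G \<gamma> N"
    and "gunion G L1" "gunion G L2" "L1 \<inter> L2 = {}" "supp u \<subseteq> L1" "supp v \<subseteq> L2"
  shows "N (u + v) \<ge> N u + \<gamma> * N v"
proof -
  obtain S1 where S1: "S1 \<subseteq> G" "L1 = \<Union>S1" using assms(3) by (auto simp: gunion_def)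
  obtain S2 where S2: "S2 \<subseteq> G" "L2 = \<Union>S2" using assms(4) by (auto simp: gunion_def)
  have ne: "{} \<notin> G" using part by (simp add: partition_on_def)
  have "S1 \<inter> S2 = {}"
  proof (rule ccontr)
    assume "S1 \<inter> S2 \<noteq> {}"
    then obtain g where "g \<in> S1" "g \<in> S2" by blast
    moreover have "g \<noteq> {}" using ne S1 \<open>g \<in> S1\<close> by auto
    ultimately obtain i where "i \<in> g" by blast
    then have "i \<in> L1 \<inter> L2" using S1 S2 \<open>g \<in> S1\<close> \<open>g \<in> S2\<close> by blast
    then show False using assms(5) by simp
  qed
  then show ?thesis using dec[unfolded gamma_decomposable_def, rule_format, of S1 S2 u v] S1 S2 assms(6,7)
    by simp
qed

lemma supp_add: "supp (u + v) \<subseteq> supp u \<union> supp v"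
  by (auto simp: supp_def)

lemma supp_sum: "supp (\<Sum>j\<in>J. w j) \<subseteq> (\<Union>j\<in>J. supp (w j))"
  by (induction J rule: infinite_finite_induct) (auto simp: supp_def)

lemma dec_iter:
  assumes part: "partition_on UNIV G" and dec: "gamma_decomposable G \<gamma> N"
    and fin: "finite J" and U: "gunion G U" and P: "\<And>j. j \<in> J \<Longrightarrow> gunion G (P j)"
    and PU: "\<And>j. j \<in> J \<Longrightarrow> P j \<inter> U = {}"
    and PP: "\<And>i j. i \<in> J \<Longrightarrow> j \<in> J \<Longrightarrow> i \<noteq> j \<Longrightarrow> P i \<inter> P j = {}"
    and su: "supp u \<subseteq> U" and sw: "\<And>j. j \<in> J \<Longrightarrow> supp (w j) \<subseteq> P j"
  shows "N (u + (\<Sum>j\<in>J. w j)) \<ge> N u + \<gamma> * (\<Sum>j\<in>J. N (w j))"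
  using fin P PU PP sw
proof (induction J rule: finite_induct)
  case empty then show ?case by simp
next
  case (insert a J)
  have IH: "N (u + (\<Sum>j\<in>J. w j)) \<ge> N u + \<gamma> * (\<Sum>j\<in>J. N (w j))"
    using insert by auto
  have g1: "gunion G (U \<union> (\<Union>j\<in>J. P j))"
    using insert by (intro gunion_Un U gunion_UN) auto
  have d1: "P a \<inter> U = {}" using insert.prems(2) by simp
  have d2: "P j \<inter> P a = {}" if "j \<in> J" for j
    using insert.prems(3)[of j a] that insert.hyps(2) by auto
  have d: "(U \<union> (\<Union>j\<in>J. P j)) \<inter> P a = {}" using d1 d2 by blast
  have "(\<Union>j\<in>J. supp (w j)) \<subseteq> (\<Union>j\<in>J. P j)" using insert.prems(4) by (intro UN_mono) auto
  then have "supp (\<Sum>j\<in>J. w j) \<subseteq> (\<Union>j\<in>J. P j)" using supp_sum[of w J] by (rule order_trans[rotated])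
  then have s1: "supp (u + (\<Sum>j\<in>J. w j)) \<subseteq> U \<union> (\<Union>j\<in>J. P j)"
    using supp_add[of u "sum w J"] su by (meson Un_mono order_trans)
  have ga: "gunion G (P a)" "supp (w a) \<subseteq> P a" using insert.prems by auto
  have "N (u + (\<Sum>j\<in>insert a J. w j)) = N ((u + (\<Sum>j\<in>J. w j)) + w a)"
    using insert.hyps by (simp add: algebra_simps)
  also have "\<dots> \<ge> N (u + (\<Sum>j\<in>J. w j)) + \<gamma> * N (w a)"
    by (rule dec_pair[OF part dec g1 ga(1) d s1 ga(2)])
  finally show ?case using IH insert.hyps by (simp add: algebra_simps)
qed



lemma ratios_ne:
  assumes part: "partition_on UNIV G" and gsize: "\<forall>g\<in>G. card g \<le> k"
  shows "ratios G k N1 N2 \<noteq> {}"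
proof -
  obtain i :: 'a where True by blast
  have "i \<in> \<Union>G" using part by (simp add: partition_on_def)
  then obtain g where g: "g \<in> G" "i \<in> g" by blast
  define x :: "real^'a" where "x = (\<chi> j. 1)"
  have "restr x g $ i \<noteq> 0" using g by (simp add: x_def)
  then have "restr x g \<noteq> 0" by (metis zero_index)
  then show ?thesis using group_is_sparse[OF gsize g(1)] unfolding ratios_def by blast
qed

lemma ratio_mem:
  assumes "group_sparse G k L" "supp v \<subseteq> L" "v \<noteq> 0"
  shows "N1 v / N2 v \<in> ratios G k N1 N2"
  unfolding ratios_def using assms supp_restr_eq[OF assms(2)]
  by (intro CollectI exI[of _ v] exI[of _ L]) simp

lemma consts_props:
  assumes part: "partition_on UNIV G" and gsize: "\<forall>g\<in>G. card g \<le> k"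
    and normA: "is_norm NA" and normP: "is_norm NP"
  shows "const_a G k NA NP > 0" "const_d G k NA \<ge> 0" "const_b G k NA NP \<ge> 0"
    "\<And>v L. group_sparse G k L \<Longrightarrow> supp v \<subseteq> L \<Longrightarrow>
        const_a G k NA NP * NA v \<le> NP v \<and> NP v \<le> const_b G k NA NP * NA v \<and>
        NA v \<le> const_d G k NA * norm v"
proof -
  obtain CA where CA: "CA \<ge> 0" "\<And>x. NA x \<le> CA * norm x" using norm_upper[OF normA] by blast
  obtain CP where CP: "CP \<ge> 0" "\<And>x. NP x \<le> CP * norm x" using norm_upper[OF normP] by blast
  obtain cA where cA: "cA > 0" "\<And>x. cA * norm x \<le> NA x" using norm_lower[OF normA] by blast
  obtain cP where cP: "cP > 0" "\<And>x. cP * norm x \<le> NP x" using norm_lower[OF normP] by blast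
  have posA: "NA v > 0" if "v \<noteq> 0" for v using is_normD(1,2)[OF normA, of v] that by linarith
  have posP: "NP v > 0" if "v \<noteq> 0" for v using is_normD(1,2)[OF normP, of v] that by linarith
  let ?R1 = "ratios G k NP NA" and ?R2 = "ratios G k NA norm"
  have neR1: "?R1 \<noteq> {}" and neR2: "?R2 \<noteq> {}" using ratios_ne[OF part gsize] by auto
  have R1_ge: "t \<ge> cP / (CA + 1)" if tR: "t \<in> ?R1" for t
  proof -
    obtain x L where xL: "t = NP (restr x L) / NA (restr x L)" "restr x L \<noteq> 0"
      using tR unfolding ratios_def by blast
    let ?v = "restr x L"
    have nv: "norm ?v > 0" using xL(2) by simp
    have "cP / (CA + 1) \<le> cP * norm ?v / ((CA + 1) * norm ?v)" using nv by simp
    also have "\<dots> \<le> NP ?v / NA ?v"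
    proof (rule frac_le)
      show "0 \<le> NP ?v" using is_normD(1)[OF normP] .
      show "cP * norm ?v \<le> NP ?v" by (rule cP(2))
      show "0 < NA ?v" using posA xL(2) by blast
      show "NA ?v \<le> (CA + 1) * norm ?v" using nv by (simp add: distrib_right) (rule order_trans[OF CA(2)], simp)
    qed
    finally show ?thesis using xL by simp
  qed
  have R1_le: "t \<le> CP / cA" if tR: "t \<in> ?R1" for t
  proof -
    obtain x L where xL: "t = NP (restr x L) / NA (restr x L)" "restr x L \<noteq> 0"
      using tR unfolding ratios_def by blast
    let ?v = "restr x L"
    have nv: "norm ?v > 0" using xL(2) by simp
    have "NP ?v / NA ?v \<le> CP * norm ?v / (cA * norm ?v)"
    proof (rule frac_le)
      show "0 \<le> CP * norm ?v" using CP by simp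
      show "NP ?v \<le> CP * norm ?v" by (rule CP(2))
      show "0 < cA * norm ?v" using cA nv by simp
      show "cA * norm ?v \<le> NA ?v" by (rule cA(2))
    qed
    also have "\<dots> = CP / cA" using nv by simp
    finally show ?thesis using xL by simp
  qed
  have R2_le: "t \<le> CA" if tR: "t \<in> ?R2" for t
  proof -
    obtain x L where xL: "t = NA (restr x L) / norm (restr x L)" "restr x L \<noteq> 0"
      using tR unfolding ratios_def by blast
    let ?v = "restr x L"
    have nv: "norm ?v > 0" using xL(2) by simp
    show ?thesis using CA(2)[of ?v] nv xL(1) by (simp add: divide_le_eq)
  qed
  have R_ge0: "t \<ge> 0" if tR: "t \<in> ratios G k N1 N2" and nn: "is_norm N1" "is_norm N2" for t N1 N2
  proof -
    obtain x L where xL: "t = N1 (restr x L) / N2 (restr x L)"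
      using tR unfolding ratios_def by blast
    show ?thesis using is_normD(1)[OF nn(1)] is_normD(1)[OF nn(2)] xL by simp
  qed
  have bdd1: "bdd_above ?R1" by (rule bdd_aboveI[OF R1_le])
  have bdd1b: "bdd_below ?R1" by (rule bdd_belowI[OF R1_ge])
  have bdd2: "bdd_above ?R2" by (rule bdd_aboveI[OF R2_le])
  have normN: "is_norm (norm :: real^'a \<Rightarrow> real)"
    unfolding is_norm_def by (auto simp: norm_triangle_ineq)
  show apos: "const_a G k NA NP > 0"
  proof -
    have "cP / (CA + 1) \<le> Inf ?R1" by (rule cInf_greatest[OF neR1 R1_ge])
    moreover have "cP / (CA + 1) > 0" using cP CA by simp
    ultimately show ?thesis by (simp add: const_a_def)
  qed
  obtain t2 where t2: "t2 \<in> ?R2" using neR2 by blast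
  show "const_d G k NA \<ge> 0"
    unfolding const_d_def using cSup_upper[OF t2 bdd2] R_ge0[OF t2 normA normN] by linarith
  obtain t1 where t1: "t1 \<in> ?R1" using neR1 by blast
  show "const_b G k NA NP \<ge> 0"
    unfolding const_b_def using cSup_upper[OF t1 bdd1] R_ge0[OF t1 normP normA] by linarith
  fix v L assume L: "group_sparse G k L" "supp v \<subseteq> L"
  show "const_a G k NA NP * NA v \<le> NP v \<and> NP v \<le> const_b G k NA NP * NA v \<and>
        NA v \<le> const_d G k NA * norm v"
  proof (cases "v = 0")
    case True then show ?thesis by (simp add: norm_zero'[OF normA] norm_zero'[OF normP])
  next
    case False
    have m1: "NP v / NA v \<in> ?R1" by (rule ratio_mem[OF L False])
    have m2: "NA v / norm v \<in> ?R2" by (rule ratio_mem[OF L False])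
    have na: "NA v > 0" using posA False by blast
    have nn: "norm v > 0" using False by simp
    have "const_a G k NA NP \<le> NP v / NA v" unfolding const_a_def by (rule cInf_lower[OF m1 bdd1b])
    then have 1: "const_a G k NA NP * NA v \<le> NP v" using na by (simp add: le_divide_eq)
    have "NP v / NA v \<le> const_b G k NA NP" unfolding const_b_def by (rule cSup_upper[OF m1 bdd1])
    then have 2: "NP v \<le> const_b G k NA NP * NA v" using na by (simp add: divide_le_eq)
    have "NA v / norm v \<le> const_d G k NA" unfolding const_d_def by (rule cSup_upper[OF m2 bdd2])
    then have 3: "NA v \<le> const_d G k NA * norm v" using nn by (simp add: divide_le_eq)
    show ?thesis using 1 2 3 by simp
  qed
qed



definition dec_ok :: "'n set set \<Rightarrow> nat \<Rightarrow> (real^'n \<Rightarrow> real) \<Rightarrow> real^'n \<Rightarrow> 'n set \<Rightarrow> 'n set list \<Rightarrow> bool" where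
  "dec_ok G k NA h L0 Ls \<longleftrightarrow>
      (\<forall>i<length Ls. group_sparse G k (Ls ! i) \<and> Ls ! i \<subseteq> - L0) \<and>
      (\<forall>i<length Ls. \<forall>j<length Ls. i \<noteq> j \<longrightarrow> Ls ! i \<inter> Ls ! j = {}) \<and>
      (\<forall>i<length Ls.
         (\<forall>L. group_sparse G k L \<and> L \<subseteq> - (L0 \<union> (\<Union>j<i. Ls ! j)) \<longrightarrow>
              NA ((restr h (- L0) - (\<Sum>j<i. restr (restr h (- L0)) (Ls ! j))) -
                   restr (restr h (- L0) - (\<Sum>j<i. restr (restr h (- L0)) (Ls ! j))) (Ls ! i))
              \<le> NA ((restr h (- L0) - (\<Sum>j<i. restr (restr h (- L0)) (Ls ! j))) -
                   restr (restr h (- L0) - (\<Sum>j<i. restr (restr h (- L0)) (Ls ! j))) L)))"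

lemma opt_dec_iff: "optimal_decomposition G k NA h L0 Ls \<longleftrightarrow> dec_ok G k NA h L0 Ls \<and> \<Union>(set Ls) = - L0"
  unfolding optimal_decomposition_def dec_ok_def Let_def by blast

lemma dec_ok_nil: "dec_ok G k NA h L0 []"
  by (simp add: dec_ok_def)

lemma app_sum: "i \<le> length Ps \<Longrightarrow> (\<Sum>j<i. f ((Ps @ [L]) ! j)) = (\<Sum>j<i. f (Ps ! j))"
  by (rule sum.cong) (auto simp: nth_append)

lemma app_UN: "i \<le> length Ps \<Longrightarrow> (\<Union>j<i. (Ps @ [L]) ! j) = (\<Union>j<i. Ps ! j)"
  by (auto simp: nth_append)

lemma UN_set_nth: "(\<Union>j<length Ps. Ps ! j) = \<Union>(set Ps)"
  by (auto simp: set_conv_nth)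

lemma dec_ok_step:
  assumes part: "partition_on UNIV G" and gsize: "\<forall>g\<in>G. card g \<le> k"
    and normA: "is_norm NA" and decA: "decomposable G NA"
    and L0: "gunion G L0" and ok: "dec_ok G k NA h L0 Ps"
    and R: "- (L0 \<union> \<Union>(set Ps)) \<noteq> {}"
  shows "\<exists>Lam. Lam \<noteq> {} \<and> Lam \<subseteq> - (L0 \<union> \<Union>(set Ps)) \<and> dec_ok G k NA h L0 (Ps @ [Lam])"
proof -
  let ?n = "length Ps"
  define R where "R = - (L0 \<union> \<Union>(set Ps))"
  define v where "v = restr h (- L0)"
  define r where "r = v - (\<Sum>j<?n. restr v (Ps ! j))"
  define \<phi> where "\<phi> L = NA (r - restr r L)" for L
  define C where "C = {L. group_sparse G k L \<and> L \<subseteq> R}"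
  have finC: "finite C" by (rule finite_subset[of _ "Pow UNIV"]) auto
  have eC: "{} \<in> C" unfolding C_def group_sparse_def by auto
  have ps_gs: "group_sparse G k (Ps ! i)" "Ps ! i \<subseteq> - L0" if "i < ?n" for i
    using ok that unfolding dec_ok_def by auto
  have gR: "gunion G R"
  proof -
    have "gunion G (\<Union>j<?n. Ps ! j)" by (rule gunion_UN) (auto intro: gs_gunion ps_gs)
    then show ?thesis unfolding R_def UN_set_nth[symmetric]
      by (intro gunion_compl[OF part] gunion_Un L0)
  qed
  obtain Ls where Ls: "Ls \<in> C" "\<And>L. L \<in> C \<Longrightarrow> \<phi> Ls \<le> \<phi> L"
  proof -
    have "Min (\<phi> ` C) \<in> \<phi> ` C" using finC eC by (intro Min_in) auto
    then obtain L1 where "L1 \<in> C" "\<phi> L1 = Min (\<phi> ` C)" by auto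
    moreover have "\<And>L. L \<in> C \<Longrightarrow> Min (\<phi> ` C) \<le> \<phi> L" using finC by simp
    ultimately show ?thesis using that by metis
  qed
  obtain Lam where Lam: "Lam \<in> C" "Lam \<noteq> {}" "\<And>L. L \<in> C \<Longrightarrow> \<phi> Lam \<le> \<phi> L"
  proof (cases "Ls = {}")
    case False then show ?thesis using that Ls by blast
  next
    case True
    obtain i where "i \<in> R" using R R_def by blast
    then obtain g where g: "g \<in> G" "i \<in> g" "g \<subseteq> R" using gunion_group[OF part gR] by blast
    have gC: "g \<in> C" using group_is_sparse[OF gsize g(1)] g(3) by (simp add: C_def)
    have gg: "gunion G g" using g(1) unfolding gunion_def by (intro exI[of _ "{g}"]) auto
    have "NA (restr r (- g)) + 1 * NA (restr r g) \<le> NA (restr r (- g) + restr r g)"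
      by (rule dec_pair[OF part decA[unfolded decomposable_def] gunion_compl[OF part gg] gg])
         (auto simp: supp_restr)
    then have "\<phi> g \<le> \<phi> {}"
      using is_normD(1)[OF normA, of "restr r g"] restr_split[of r g]
      by (simp add: \<phi>_def restr_compl add.commute)
    then have "\<phi> g \<le> \<phi> L" if "L \<in> C" for L using Ls True that by force
    moreover have "g \<noteq> {}" using g by blast
    ultimately show ?thesis using that gC by blast
  qed
  have LamR: "Lam \<subseteq> R" and Lam_gs: "group_sparse G k Lam" using Lam(1) by (auto simp: C_def)
  have "dec_ok G k NA h L0 (Ps @ [Lam])"
    unfolding dec_ok_def
  proof (intro conjI allI impI)
    fix i assume i: "i < length (Ps @ [Lam])"
    show "group_sparse G k ((Ps @ [Lam]) ! i)"
      using i ps_gs Lam_gs by (auto simp: nth_append less_Suc_eq)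
  next
    fix i assume i: "i < length (Ps @ [Lam])"
    show "(Ps @ [Lam]) ! i \<subseteq> - L0"
      using i ps_gs LamR unfolding R_def by (auto simp: nth_append less_Suc_eq)
  next
    fix i j assume i: "i < length (Ps @ [Lam])" and j: "j < length (Ps @ [Lam])" and ij: "i \<noteq> j"
    have djP: "Ps ! i \<inter> Ps ! j = {}" if "i < ?n" "j < ?n" "i \<noteq> j" for i j
      using ok that unfolding dec_ok_def by blast
    have djL: "Ps ! i \<inter> Lam = {}" if "i < ?n" for i
      using LamR that unfolding R_def by (auto simp: set_conv_nth)
    show "(Ps @ [Lam]) ! i \<inter> (Ps @ [Lam]) ! j = {}"
      using i j ij djP by (auto simp: nth_append less_Suc_eq) (use djL in blast)+
  next
    fix i L assume i: "i < length (Ps @ [Lam])"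
      and L: "group_sparse G k L \<and> L \<subseteq> - (L0 \<union> (\<Union>j<i. (Ps @ [Lam]) ! j))"
    have ile: "i \<le> ?n" using i by simp
    note eqs = app_sum[OF ile, of "\<lambda>S. restr (restr h (- L0)) S" Lam] app_UN[OF ile, of Lam]
    show "NA ((restr h (- L0) - (\<Sum>j<i. restr (restr h (- L0)) ((Ps @ [Lam]) ! j))) -
                   restr (restr h (- L0) - (\<Sum>j<i. restr (restr h (- L0)) ((Ps @ [Lam]) ! j))) ((Ps @ [Lam]) ! i))
              \<le> NA ((restr h (- L0) - (\<Sum>j<i. restr (restr h (- L0)) ((Ps @ [Lam]) ! j))) -
                   restr (restr h (- L0) - (\<Sum>j<i. restr (restr h (- L0)) ((Ps @ [Lam]) ! j))) L)"
    proof (cases "i < ?n")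
      case True
      have "(Ps @ [Lam]) ! i = Ps ! i" using True by (simp add: nth_append)
      then show ?thesis using ok True L unfolding eqs dec_ok_def by auto
    next
      case False
      then have iN: "i = ?n" using ile by simp
      have "(\<Union>j<i. (Ps @ [Lam]) ! j) = \<Union>(set Ps)" using eqs(2) iN UN_set_nth by simp
      then have LC: "L \<in> C" using L unfolding C_def R_def by simp
      have "(Ps @ [Lam]) ! i = Lam" using iN by simp
      have S: "(\<Sum>j<i. restr (restr h (-L0)) ((Ps@[Lam])!j)) = (\<Sum>j<?n. restr (restr h (-L0)) (Ps!j))"
        using app_sum[OF ile, of "\<lambda>S. restr (restr h (- L0)) S" Lam] iN by simp
      show ?thesis using Lam(3)[OF LC] \<open>(Ps @ [Lam]) ! i = Lam\<close> unfolding S \<phi>_def r_def v_def by simp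
    qed
  qed
  then show ?thesis using Lam(2) LamR R_def by blast
qed

lemma dec_exists:
  assumes part: "partition_on UNIV G" and gsize: "\<forall>g\<in>G. card g \<le> k"
    and normA: "is_norm NA" and decA: "decomposable G NA"
    and L0: "gunion G L0"
  shows "\<exists>Ls. optimal_decomposition G k NA h L0 Ls \<and> Ls \<noteq> []"
proof -
  have main: "\<And>Ps. dec_ok G k NA h L0 Ps \<Longrightarrow> card (- (L0 \<union> \<Union>(set Ps))) = m \<Longrightarrow>
      \<exists>Ls. dec_ok G k NA h L0 Ls \<and> \<Union>(set Ls) = - L0" for m
  proof (induction m rule: less_induct)
    case (less m Ps)
    have sub: "\<Union>(set Ps) \<subseteq> - L0"
      using less.prems(1) unfolding dec_ok_def by (auto simp: set_conv_nth)
    show ?case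
    proof (cases "- (L0 \<union> \<Union>(set Ps)) = {}")
      case True
      then show ?thesis using less.prems(1) sub by (intro exI[of _ Ps]) auto
    next
      case False
      obtain Lam where Lam: "Lam \<noteq> {}" "Lam \<subseteq> - (L0 \<union> \<Union>(set Ps))" "dec_ok G k NA h L0 (Ps @ [Lam])"
        using dec_ok_step[OF part gsize normA decA L0 less.prems(1) False] by blast
      obtain y where y: "y \<in> Lam" using Lam(1) by blast
      have "- (L0 \<union> \<Union>(set (Ps @ [Lam]))) \<subset> - (L0 \<union> \<Union>(set Ps))"
      proof (rule psubsetI)
        show "- (L0 \<union> \<Union>(set (Ps @ [Lam]))) \<subseteq> - (L0 \<union> \<Union>(set Ps))" by auto
        show "- (L0 \<union> \<Union>(set (Ps @ [Lam]))) \<noteq> - (L0 \<union> \<Union>(set Ps))"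
        proof
          assume eq: "- (L0 \<union> \<Union>(set (Ps @ [Lam]))) = - (L0 \<union> \<Union>(set Ps))"
          have a: "y \<in> - (L0 \<union> \<Union>(set Ps))" using y Lam(2) by blast
          have b: "y \<notin> - (L0 \<union> \<Union>(set (Ps @ [Lam])))" using y by simp
          have c: "y \<notin> - (L0 \<union> \<Union>(set Ps))" using b unfolding eq .
          show False using a c by (rule notE[rotated])
        qed
      qed
      then have "card (- (L0 \<union> \<Union>(set (Ps @ [Lam])))) < m"
        using less.prems(2) by (metis finite psubset_card_mono)
      then show ?thesis using less.IH Lam(3) by blast
    qed
  qed
  obtain Ls where Ls: "dec_ok G k NA h L0 Ls" "\<Union>(set Ls) = - L0"
    using main[OF dec_ok_nil refl] by blast
  show ?thesis
  proof (cases "Ls = []")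
    case False then show ?thesis using Ls opt_dec_iff by blast
  next
    case True
    then have e: "- L0 = {}" using Ls by simp
    have "dec_ok G k NA h L0 [{}]" using e unfolding dec_ok_def group_sparse_def by auto
    then show ?thesis using e opt_dec_iff[of G k NA h L0 "[{}]"] by auto
  qed
qed



lemma polar: "(norm (a + b))\<^sup>2 - (norm (a - b))\<^sup>2 = 4 * (a \<bullet> (b::'a::real_inner))"
  by (simp add: power2_norm_eq_inner inner_add_left inner_add_right inner_diff_left
      inner_diff_right inner_commute algebra_simps)

lemma mv_scaleR: "(A::real^'n^'m) *v (c *\<^sub>R x) = c *\<^sub>R (A *v x)"
  using vec.scale[of A c x] by (simp add: scalar_mult_eq_scaleR)

lemma supp_scale: "supp (c *\<^sub>R u) \<subseteq> supp u"
  by (auto simp: supp_def)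

lemma supp_uminus: "supp (- u) = supp u"
  by (auto simp: supp_def)

lemma grip_inner:
  assumes grip: "GRIP G t A \<delta>" and L: "group_sparse G t L"
    and su: "supp u \<subseteq> P" and sv: "supp v \<subseteq> Q" and PQ: "P \<inter> Q = {}" and PQL: "P \<union> Q \<subseteq> L"
  shows "\<bar>(A *v u) \<bullet> (A *v v)\<bar> \<le> \<delta> * norm u * norm v"
proof (cases "u = 0 \<or> v = 0")
  case True
  then show ?thesis by auto
next
  case False
  then have nu: "norm u > 0" and nv: "norm v > 0" by auto
  define u' where "u' = (1 / norm u) *\<^sub>R u"
  define v' where "v' = (1 / norm v) *\<^sub>R v"
  have su': "supp u' \<subseteq> P" using su supp_scale[of _ u] unfolding u'_def by blast
  have sv': "supp v' \<subseteq> Q" using sv supp_scale[of _ v] unfolding v'_def by blast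
  have nu': "norm u' = 1" using nu by (simp add: u'_def)
  have nv': "norm v' = 1" using nv by (simp add: v'_def)
  have sq1: "(norm (u' + v'))\<^sup>2 = 2" using norm_disj_sq[OF PQ su' sv'] nu' nv' by simp
  have sq2: "(norm (u' - v'))\<^sup>2 = 2"
    using norm_disj_sq[OF PQ su', of "- v'"] sv' nu' nv' by (simp add: supp_uminus)
  have spp: "supp (u' + v') \<subseteq> L" using supp_add[of u' v'] su' sv' PQL by blast
  have spm: "supp (u' - v') \<subseteq> L" using supp_add[of u' "- v'"] su' sv' PQL
    by (auto simp: supp_uminus) blast
  have g1: "(1 - \<delta>) * 2 \<le> (norm (A *v (u' + v')))\<^sup>2 \<and> (norm (A *v (u' + v')))\<^sup>2 \<le> (1 + \<delta>) * 2"
    using grip L spp sq1 unfolding GRIP_def by metis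
  have g2: "(1 - \<delta>) * 2 \<le> (norm (A *v (u' - v')))\<^sup>2 \<and> (norm (A *v (u' - v')))\<^sup>2 \<le> (1 + \<delta>) * 2"
    using grip L spm sq2 unfolding GRIP_def by metis
  have p: "(norm (A *v u' + A *v v'))\<^sup>2 - (norm (A *v u' - A *v v'))\<^sup>2 = 4 * ((A *v u') \<bullet> (A *v v'))"
    by (rule polar)
  have "\<bar>(A *v u') \<bullet> (A *v v')\<bar> \<le> \<delta>"
    using g1 g2 p by (simp add: matrix_vector_right_distrib matrix_vector_mult_diff_distrib) linarith
  moreover have "(A *v u) \<bullet> (A *v v) = norm u * norm v * ((A *v u') \<bullet> (A *v v'))"
    using nu nv by (simp add: u'_def v'_def mv_scaleR)
  ultimately show ?thesis using nu nv
    by (simp add: abs_mult mult.assoc mult_left_mono mult.commute mult.left_commute)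
qed

lemma gs_union2:
  assumes "group_sparse G k A" "group_sparse G k B"
  shows "group_sparse G (2 * k) (A \<union> B)"
proof -
  obtain S1 where "S1 \<subseteq> G" "A = \<Union>S1" using assms(1) by (auto simp: group_sparse_def)
  moreover obtain S2 where "S2 \<subseteq> G" "B = \<Union>S2" using assms(2) by (auto simp: group_sparse_def)
  ultimately have "\<exists>S\<subseteq>G. A \<union> B = \<Union>S" by (intro exI[of _ "S1 \<union> S2"]) auto
  moreover have "card (A \<union> B) \<le> 2 * k"
    using card_Un_le[of A B] assms by (simp add: group_sparse_def)
  ultimately show ?thesis by (simp add: group_sparse_def)
qed



lemma id1:
  fixes r d f \<delta> \<epsilon> \<sigma> \<gamma> \<Delta> :: real
  assumes f: "f > 0" and Dd: "\<Delta> = 1 - (1 + sqrt 2 * r * d / f) * \<delta>" and Dp: "\<Delta> > 0"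
  shows "(1 + r * d / f) * ((2 * \<epsilon> * sqrt (1 + \<delta>) + sqrt 2 * \<delta> * (r * (1 + \<gamma>)) * \<sigma> / f) / \<Delta>) + r * (1 + \<gamma>) * \<sigma> / f
   = r * (1 + \<gamma>) / f * ((1 + (sqrt 2 - 1) * \<delta>) / \<Delta>) * \<sigma> +
              2 * (1 + r * d / f) * (sqrt (1 + \<delta>) / \<Delta>) * \<epsilon>"
    and "(1 + r) * d * ((2 * \<epsilon> * sqrt (1 + \<delta>) + sqrt 2 * \<delta> * (r * (1 + \<gamma>)) * \<sigma> / f) / \<Delta>) + r * (1 + \<gamma>) * \<sigma> = r * (1 + \<gamma>) * ((1 + (sqrt 2 * d / f - 1) * \<delta>) / \<Delta>) * \<sigma> +
              2 * d * (1 + r) * (sqrt (1 + \<delta>) / \<Delta>) * \<epsilon>"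
proof -
  define P where "P = f - f * \<delta> - sqrt 2 * r * d * \<delta>"
  have DP: "\<Delta> = P / f" using f unfolding Dd P_def by (simp add: field_simps)
  have Pp: "P > 0" using Dp f DP by (simp add: zero_less_divide_iff)
  show "(1 + r * d / f) * ((2 * \<epsilon> * sqrt (1 + \<delta>) + sqrt 2 * \<delta> * (r * (1 + \<gamma>)) * \<sigma> / f) / \<Delta>) + r * (1 + \<gamma>) * \<sigma> / f
   = r * (1 + \<gamma>) / f * ((1 + (sqrt 2 - 1) * \<delta>) / \<Delta>) * \<sigma> +
              2 * (1 + r * d / f) * (sqrt (1 + \<delta>) / \<Delta>) * \<epsilon>"
    unfolding DP using f Pp by (simp add: field_simps) (simp add: P_def algebra_simps)
  show "(1 + r) * d * ((2 * \<epsilon> * sqrt (1 + \<delta>) + sqrt 2 * \<delta> * (r * (1 + \<gamma>)) * \<sigma> / f) / \<Delta>) + r * (1 + \<gamma>) * \<sigma> = r * (1 + \<gamma>) * ((1 + (sqrt 2 * d / f - 1) * \<delta>) / \<Delta>) * \<sigma> +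
              2 * d * (1 + r) * (sqrt (1 + \<delta>) / \<Delta>) * \<epsilon>"
    unfolding DP using f Pp by (simp add: field_simps) (simp add: P_def algebra_simps)
qed

lemma final_alg:
  fixes r d f \<delta> \<epsilon> \<sigma> t \<gamma> nh NAh \<Delta> :: real
  assumes f: "f > 0" and Dd: "\<Delta> = 1 - (1 + sqrt 2 * r * d / f) * \<delta>" and Dp: "\<Delta> > 0"
    and r: "r \<ge> 0" and d: "d \<ge> 0" and \<gamma>: "\<gamma> > 0"
    and ht: "\<Delta> * t \<le> 2 * \<epsilon> * sqrt (1 + \<delta>) + sqrt 2 * \<delta> * (r * (1 + \<gamma>)) * \<sigma> / f"
    and nh: "nh \<le> t + (r * d * t + r * (1 + \<gamma>) * \<sigma>) / f"
    and NAh: "NAh \<le> (1 + r) * d * t + r * (1 + \<gamma>) * \<sigma>"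
  shows "nh \<le> r * (1 + \<gamma>) / f * ((1 + (sqrt 2 - 1) * \<delta>) / \<Delta>) * \<sigma> +
              2 * (1 + r * d / f) * (sqrt (1 + \<delta>) / \<Delta>) * \<epsilon>"
    and "NAh \<le> r * (1 + \<gamma>) * ((1 + (sqrt 2 * d / f - 1) * \<delta>) / \<Delta>) * \<sigma> +
              2 * d * (1 + r) * (sqrt (1 + \<delta>) / \<Delta>) * \<epsilon>"
proof -
  define E where "E = 2 * \<epsilon> * sqrt (1 + \<delta>) + sqrt 2 * \<delta> * (r * (1 + \<gamma>)) * \<sigma> / f"
  have tE: "t \<le> E / \<Delta>" using ht Dp by (simp add: E_def pos_le_divide_eq mult.commute)
  have c1: "1 + r * d / f \<ge> 0" using r d f by simp
  have "nh \<le> (1 + r * d / f) * t + r * (1 + \<gamma>) * \<sigma> / f"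
  proof -
    have "t + (r * d * t + r * (1 + \<gamma>) * \<sigma>) / f = (1 + r * d / f) * t + r * (1 + \<gamma>) * \<sigma> / f"
      using f by (simp add: field_simps)
    then show ?thesis using nh by linarith
  qed
  also have "\<dots> \<le> (1 + r * d / f) * (E / \<Delta>) + r * (1 + \<gamma>) * \<sigma> / f"
    using mult_left_mono[OF tE c1] by linarith
  also have "\<dots> = r * (1 + \<gamma>) / f * ((1 + (sqrt 2 - 1) * \<delta>) / \<Delta>) * \<sigma> +
              2 * (1 + r * d / f) * (sqrt (1 + \<delta>) / \<Delta>) * \<epsilon>"
    unfolding E_def by (rule id1(1)[OF f Dd Dp])
  finally show "nh \<le> r * (1 + \<gamma>) / f * ((1 + (sqrt 2 - 1) * \<delta>) / \<Delta>) * \<sigma> +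
              2 * (1 + r * d / f) * (sqrt (1 + \<delta>) / \<Delta>) * \<epsilon>" .
  have c2: "(1 + r) * d \<ge> 0" using r d by simp
  have "NAh \<le> (1 + r) * d * (E / \<Delta>) + r * (1 + \<gamma>) * \<sigma>"
    using NAh mult_left_mono[OF tE c2] by linarith
  also have "\<dots> = r * (1 + \<gamma>) * ((1 + (sqrt 2 * d / f - 1) * \<delta>) / \<Delta>) * \<sigma> +
              2 * d * (1 + r) * (sqrt (1 + \<delta>) / \<Delta>) * \<epsilon>"
    unfolding E_def by (rule id1(2)[OF f Dd Dp])
  finally show "NAh \<le> r * (1 + \<gamma>) * ((1 + (sqrt 2 * d / f - 1) * \<delta>) / \<Delta>) * \<sigma> +
              2 * d * (1 + r) * (sqrt (1 + \<delta>) / \<Delta>) * \<epsilon>" .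
qed



theorem theorem4p1:
  fixes G :: "'n::finite set set" and k :: nat
    and NA NP :: "real^'n \<Rightarrow> real" and \<gamma> f \<delta> \<epsilon> :: real
    and A :: "real^'n^'m::finite" and x xhat :: "real^'n" and \<eta> :: "real^'m"
  assumes part: "partition_on UNIV G" and gsize: "\<forall>g\<in>G. card g \<le> k"
    and k_pos: "k > 0"
    and normA: "is_norm NA" and normP: "is_norm NP"
    and decA: "decomposable G NA"
    and \<gamma>: "0 < \<gamma>" "\<gamma> \<le> 1" and decP: "gamma_decomposable G \<gamma> NP"
    and f_pos: "f > 0"
    and f_prop: "\<forall>h L0 Ls. group_sparse G k L0 \<and> optimal_decomposition G k NA h L0 Ls \<longrightarrow>
                   (\<Sum>j\<in>{1..<length Ls}. norm (restr h (Ls ! j))) \<le> (1 / f) * NA (restr h (- L0))"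
    and grip: "GRIP G (2 * k) A \<delta>" and \<delta>: "0 < \<delta>" "\<delta> < 1"
    and compress: "\<delta> < f / (f + sqrt 2 * (const_b G k NA NP / (const_a G k NA NP * \<gamma>)) * const_d G k NA)"
    and noise: "norm \<eta> \<le> \<epsilon>"
    and xhat_feas: "norm ((A *v x + \<eta>) - A *v xhat) \<le> \<epsilon>"
    and xhat_min: "\<forall>z. norm ((A *v x + \<eta>) - A *v z) \<le> \<epsilon> \<longrightarrow> NP xhat \<le> NP z"
  shows "let a = const_a G k NA NP; b = const_b G k NA NP; d = const_d G k NA;
             r = b / (a * \<gamma>); \<sigma> = sparsity_index G k x NA;
             \<Delta> = 1 - (1 + sqrt 2 * r * d / f) * \<delta>;
             D1 = r * (1 + \<gamma>) / f * ((1 + (sqrt 2 - 1) * \<delta>) / \<Delta>);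
             D2 = 2 * (1 + r * d / f) * (sqrt (1 + \<delta>) / \<Delta>);
             D3 = r * (1 + \<gamma>) * ((1 + (sqrt 2 * d / f - 1) * \<delta>) / \<Delta>);
             D4 = 2 * d * (1 + r) * (sqrt (1 + \<delta>) / \<Delta>)
         in norm (xhat - x) \<le> D1 * \<sigma> + D2 * \<epsilon> \<and> NA (xhat - x) \<le> D3 * \<sigma> + D4 * \<epsilon>"
proof -
  define a where "a = const_a G k NA NP"
  define b where "b = const_b G k NA NP"
  define d where "d = const_d G k NA"
  define r where "r = b / (a * \<gamma>)"
  define \<sigma> where "\<sigma> = sparsity_index G k x NA"
  define \<Delta> where "\<Delta> = 1 - (1 + sqrt 2 * r * d / f) * \<delta>"
  note cp = consts_props[OF part gsize normA normP]
  have apos: "a > 0" and d0: "d \<ge> 0" and b0: "b \<ge> 0" using cp(1-3) by (auto simp: a_def b_def d_def)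
  have bnd: "a * NA v \<le> NP v" "NP v \<le> b * NA v" "NA v \<le> d * norm v"
    if "group_sparse G k L" "supp v \<subseteq> L" for v L
    using cp(4)[OF that] by (auto simp: a_def b_def d_def)
  have r0: "r \<ge> 0" using apos b0 \<gamma> by (simp add: r_def)
  have Dpos: "\<Delta> > 0"
  proof -
    have den: "f + sqrt 2 * r * d > 0" using f_pos r0 d0 by (simp add: add_pos_nonneg)
    have "\<delta> * (f + sqrt 2 * r * d) < f"
      using compress den unfolding r_def[symmetric] b_def[symmetric] a_def[symmetric] d_def[symmetric]
      by (simp add: pos_less_divide_eq mult.assoc)
    then show ?thesis using f_pos unfolding \<Delta>_def by (simp add: field_simps)
  qed
  have eps0: "\<epsilon> \<ge> 0" using noise norm_ge_zero[of \<eta>] by linarith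
  define h where "h = xhat - x"
  have xfeas: "NP xhat \<le> NP x" using xhat_min noise by simp
  have Ah: "norm (A *v h) \<le> 2 * \<epsilon>"
  proof -
    have "A *v h = \<eta> - ((A *v x + \<eta>) - A *v xhat)"
      by (simp add: h_def matrix_vector_mult_diff_distrib)
    then have "norm (A *v h) \<le> norm \<eta> + norm ((A *v x + \<eta>) - A *v xhat)"
      by (metis norm_triangle_ineq4)
    then show ?thesis using noise xhat_feas by linarith
  qed
  have finL: "finite {L. group_sparse G k L}" by (rule finite_subset[of _ "Pow UNIV"]) auto
  have neL: "{L. group_sparse G k L} \<noteq> {}"
    using group_sparse_def[of G k "{}"] by (auto intro: exI[of _ "{}"])
  obtain L0 where L0: "group_sparse G k L0" "NA (x - restr x L0) = \<sigma>"
  proof -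
    have "\<sigma> \<in> (\<lambda>L. NA (x - restr x L)) ` {L. group_sparse G k L}"
      unfolding \<sigma>_def sparsity_index_def using finL neL by (intro Min_in) auto
    then show ?thesis using that by auto
  qed
  have sig: "NA (restr x (- L0)) = \<sigma>" using L0(2) by (simp add: restr_compl)
  have gL0: "gunion G L0" by (rule gs_gunion[OF L0(1)])
  obtain Ls where opt: "optimal_decomposition G k NA h L0 Ls" and Lsne: "Ls \<noteq> []"
    using dec_exists[OF part gsize normA decA gL0] by blast
  have okL: "dec_ok G k NA h L0 Ls" and cov: "\<Union>(set Ls) = - L0"
    using opt opt_dec_iff by blast+
  define s where "s = length Ls"
  define Lam where "Lam j = Ls ! j" for j
  have s0: "s > 0" using Lsne by (simp add: s_def)
  have Lgs: "group_sparse G k (Lam j)" "Lam j \<subseteq> - L0" if "j < s" for j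
    using okL that unfolding dec_ok_def Lam_def s_def by auto
  have Ldj: "Lam i \<inter> Lam j = {}" if "i < s" "j < s" "i \<noteq> j" for i j
    using okL that unfolding dec_ok_def Lam_def s_def by blast
  have LL0: "Lam j \<inter> L0 = {}" if "j < s" for j using Lgs(2)[OF that] by blast
  have covU: "(\<Union>j<s. Lam j) = - L0" using cov UN_set_nth[of Ls] by (simp add: Lam_def s_def)
  have decsum: "restr w (- L0) = (\<Sum>j<s. restr w (Lam j))" for w
    using restr_sum_disj[of "{..<s}" Lam w] Ldj covU by auto
  have fp: "(\<Sum>j\<in>{1..<s}. norm (restr h (Lam j))) \<le> (1 / f) * NA (restr h (- L0))"
    using f_prop L0(1) opt by (auto simp: s_def Lam_def)
  note normNA = is_normD[OF normA] and normNP = is_normD[OF normP]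
  define HA0 where "HA0 = NA (restr h L0)"
  define HAc where "HAc = NA (restr h (- L0))"
  have cone: "HAc \<le> r * HA0 + r * (1 + \<gamma>) * \<sigma>"
  proof -
    have xh: "xhat = x + h" by (simp add: h_def)
    have dP: "NP (restr xhat L0 + (\<Sum>j<s. restr xhat (Lam j))) \<ge>
              NP (restr xhat L0) + \<gamma> * (\<Sum>j<s. NP (restr xhat (Lam j)))"
      apply (rule dec_iter[OF part decP _ gL0])
      apply (auto intro: gs_gunion Lgs)
      using LL0 Ldj supp_restr by blast+
    have e1: "restr xhat L0 + (\<Sum>j<s. restr xhat (Lam j)) = xhat"
      using restr_split[of xhat L0] decsum[of xhat] by simp
    have t1: "NP (restr xhat L0) \<ge> NP (restr x L0) - b * HA0"
      using norm_diff_ge[OF normP, of "restr x L0" "restr h L0"] bnd(2)[OF L0(1) supp_restr, of h]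
      by (simp add: xh restr_add HA0_def)
    have t2: "NP (restr xhat (Lam j)) \<ge> a * NA (restr h (Lam j)) - b * NA (restr x (Lam j))"
      if "j < s" for j
      using norm_diff_ge2[OF normP, of "restr x (Lam j)" "restr h (Lam j)"]
        norm_diff_ge2[OF normP, of "restr h (Lam j)" "restr x (Lam j)"]
        bnd(1)[OF Lgs(1)[OF that] supp_restr, of h] bnd(2)[OF Lgs(1)[OF that] supp_restr, of x]
      by (simp add: xh restr_add)
    have sh: "(\<Sum>j<s. NA (restr h (Lam j))) \<ge> HAc"
      using norm_sum'[OF normA, of "\<lambda>j. restr h (Lam j)" "{..<s}"] decsum[of h] by (simp add: HAc_def)
    have sx: "(\<Sum>j<s. NA (restr x (Lam j))) \<le> \<sigma>"
    proof -
      have "NA (0 + (\<Sum>j<s. restr x (Lam j))) \<ge> NA 0 + 1 * (\<Sum>j<s. NA (restr x (Lam j)))"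
        apply (rule dec_iter[OF part decA[unfolded decomposable_def] _ gunion_empty])
        apply (auto intro: gs_gunion Lgs supp_restr simp: supp_def)
        using Ldj by blast
      then show ?thesis using decsum[of x] sig norm_zero'[OF normA] by simp
    qed
    have "(\<Sum>j<s. NP (restr xhat (Lam j))) \<ge> (\<Sum>j<s. a * NA (restr h (Lam j)) - b * NA (restr x (Lam j)))"
      by (rule sum_mono) (use t2 in auto)
    also have "(\<Sum>j<s. a * NA (restr h (Lam j)) - b * NA (restr x (Lam j))) =
        a * (\<Sum>j<s. NA (restr h (Lam j))) - b * (\<Sum>j<s. NA (restr x (Lam j)))"
      by (simp add: sum_subtractf sum_distrib_left)
    finally have t3: "(\<Sum>j<s. NP (restr xhat (Lam j))) \<ge> a * HAc - b * \<sigma>"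
      using mult_left_mono[OF sh less_imp_le[OF apos]] mult_left_mono[OF sx b0] by linarith
    have up: "NP x \<le> NP (restr x L0) + b * \<sigma>"
    proof -
      have "NP x \<le> NP (restr x L0) + NP (restr x (- L0))"
        using normNP(4)[of "restr x L0" "restr x (- L0)"] restr_split[of x L0] by simp
      also have "NP (restr x (- L0)) \<le> (\<Sum>j<s. NP (restr x (Lam j)))"
        using norm_sum'[OF normP, of "\<lambda>j. restr x (Lam j)" "{..<s}"] decsum[of x] by simp
      also have "\<dots> \<le> (\<Sum>j<s. b * NA (restr x (Lam j)))"
        by (rule sum_mono) (use bnd(2)[OF Lgs(1) supp_restr] in auto)
      also have "\<dots> \<le> b * \<sigma>" using mult_left_mono[OF sx b0] by (simp add: sum_distrib_left)
      finally show ?thesis by simp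
    qed
    have "\<gamma> * (a * HAc - b * \<sigma>) \<le> \<gamma> * (\<Sum>j<s. NP (restr xhat (Lam j)))"
      using mult_left_mono[OF t3] \<gamma> by simp
    then have "\<gamma> * a * HAc \<le> b * HA0 + (1 + \<gamma>) * b * \<sigma>"
      using dP e1 t1 up xfeas by (simp add: algebra_simps)
    moreover have "\<gamma> * a > 0" using \<gamma> apos by simp
    ultimately have "HAc \<le> (b * HA0 + (1 + \<gamma>) * b * \<sigma>) / (\<gamma> * a)"
      by (simp add: pos_le_divide_eq mult.commute)
    then show ?thesis by (simp add: r_def add_divide_distrib mult.commute mult.left_commute)
  qed
  define T where "T = L0 \<union> Lam 0"
  define hT where "hT = restr h T"
  define t where "t = norm hT"
  have L1gs: "group_sparse G k (Lam 0)" using Lgs(1)[OF s0] .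
  have dj01: "L0 \<inter> Lam 0 = {}" using LL0[OF s0] by blast
  have hTsplit: "hT = restr h L0 + restr h (Lam 0)" by (simp add: hT_def T_def restr_union_disj[OF dj01])
  have hsplit: "h = hT + (\<Sum>j\<in>{1..<s}. restr h (Lam j))"
  proof -
    have "(\<Sum>j<s. restr h (Lam j)) = restr h (Lam 0) + (\<Sum>j\<in>{1..<s}. restr h (Lam j))"
      using sum.atLeast_Suc_lessThan[OF s0, of "\<lambda>j. restr h (Lam j)"] by (simp add: atLeast0LessThan)
    then show ?thesis using restr_split[of h L0] decsum[of h] hTsplit by (simp add: algebra_simps)
  qed
  have tsq: "t\<^sup>2 = (norm (restr h L0))\<^sup>2 + (norm (restr h (Lam 0)))\<^sup>2"
    unfolding t_def hTsplit by (rule norm_disj_sq[OF dj01 supp_restr supp_restr])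
  have h0t: "norm (restr h L0) \<le> t"
    using norm_restr_le[of hT L0] dj01 by (simp add: t_def hT_def T_def Int_absorb2)
  have sum01: "norm (restr h L0) + norm (restr h (Lam 0)) \<le> sqrt 2 * t"
  proof -
    have "(norm (restr h L0) + norm (restr h (Lam 0)))\<^sup>2 \<le> 2 * ((norm (restr h L0))\<^sup>2 + (norm (restr h (Lam 0)))\<^sup>2)"
      using zero_le_power2[of "norm (restr h L0) - norm (restr h (Lam 0))"]
      by (simp add: power2_eq_square algebra_simps)
    then have "(norm (restr h L0) + norm (restr h (Lam 0)))\<^sup>2 \<le> 2 * t\<^sup>2" unfolding tsq .
    then have "norm (restr h L0) + norm (restr h (Lam 0)) \<le> sqrt (2 * t\<^sup>2)" by (rule real_le_rsqrt)
    also have "\<dots> = sqrt 2 * t" by (simp add: real_sqrt_mult t_def)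
    finally show ?thesis .
  qed
  have TL: "group_sparse G (2 * k) T" unfolding T_def by (rule gs_union2[OF L0(1) L1gs])
  have gT: "(1 - \<delta>) * t\<^sup>2 \<le> (norm (A *v hT))\<^sup>2" "(norm (A *v hT))\<^sup>2 \<le> (1 + \<delta>) * t\<^sup>2"
    using grip TL supp_restr[of h T] unfolding GRIP_def hT_def t_def by blast+
  have AhT: "norm (A *v hT) \<le> sqrt (1 + \<delta>) * t"
  proof -
    have "norm (A *v hT) \<le> sqrt ((1 + \<delta>) * t\<^sup>2)" by (rule real_le_rsqrt[OF gT(2)])
    also have "\<dots> = sqrt (1 + \<delta>) * t" by (simp add: real_sqrt_mult t_def)
    finally show ?thesis .
  qed
  have cross: "- ((A *v hT) \<bullet> (A *v restr h (Lam j))) \<le> \<delta> * sqrt 2 * t * norm (restr h (Lam j))"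
    if j: "j \<in> {1..<s}" for j
  proof -
    have js: "j < s" and j0: "j \<noteq> 0" using j by auto
    have a1: "\<bar>(A *v restr h L0) \<bullet> (A *v restr h (Lam j))\<bar> \<le> \<delta> * norm (restr h L0) * norm (restr h (Lam j))"
      by (rule grip_inner[OF grip gs_union2[OF L0(1) Lgs(1)[OF js]] supp_restr supp_restr])
         (use LL0[OF js] in auto)
    have a2: "\<bar>(A *v restr h (Lam 0)) \<bullet> (A *v restr h (Lam j))\<bar> \<le> \<delta> * norm (restr h (Lam 0)) * norm (restr h (Lam j))"
      by (rule grip_inner[OF grip gs_union2[OF L1gs Lgs(1)[OF js]] supp_restr supp_restr])
         (use Ldj[OF s0 js] j0 in auto)
    have "(A *v hT) \<bullet> (A *v restr h (Lam j)) = (A *v restr h L0) \<bullet> (A *v restr h (Lam j)) +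
          (A *v restr h (Lam 0)) \<bullet> (A *v restr h (Lam j))"
      by (simp add: hTsplit matrix_vector_right_distrib inner_add_left)
    then have "- ((A *v hT) \<bullet> (A *v restr h (Lam j))) \<le>
        \<delta> * (norm (restr h L0) + norm (restr h (Lam 0))) * norm (restr h (Lam j))"
      using a1 a2 by (simp add: algebra_simps)
    also have "\<dots> \<le> \<delta> * (sqrt 2 * t) * norm (restr h (Lam j))"
      using sum01 \<delta> by (intro mult_right_mono mult_left_mono) auto
    finally show ?thesis by (simp add: mult.assoc)
  qed
  have tail: "(\<Sum>j\<in>{1..<s}. norm (restr h (Lam j))) \<le> HAc / f"
    using fp by (simp add: HAc_def)
  have main1: "(1 - \<delta>) * t \<le> 2 * \<epsilon> * sqrt (1 + \<delta>) + sqrt 2 * \<delta> * HAc / f"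
  proof (cases "t = 0")
    case True
    have "HAc \<ge> 0" unfolding HAc_def using normNA(1) .
    then show ?thesis using True eps0 \<delta> f_pos by (simp add: add_nonneg_nonneg)
  next
    case False
    then have tp: "t > 0" by (simp add: t_def)
    have "(norm (A *v hT))\<^sup>2 = (A *v hT) \<bullet> (A *v h) - (\<Sum>j\<in>{1..<s}. (A *v hT) \<bullet> (A *v restr h (Lam j)))"
    proof -
      have "A *v h = A *v hT + (\<Sum>j\<in>{1..<s}. A *v restr h (Lam j))"
        using arg_cong[OF hsplit, of "\<lambda>v. A *v v"] by (simp add: matrix_vector_right_distrib vec.sum)
      then have "A *v hT = A *v h - (\<Sum>j\<in>{1..<s}. A *v restr h (Lam j))"
        by (simp add: algebra_simps)
      then show ?thesis by (simp add: power2_norm_eq_inner inner_diff_right inner_sum_right)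
    qed
    also have "\<dots> \<le> sqrt (1 + \<delta>) * t * (2 * \<epsilon>) + (\<Sum>j\<in>{1..<s}. \<delta> * sqrt 2 * t * norm (restr h (Lam j)))"
    proof -
      have "(A *v hT) \<bullet> (A *v h) \<le> norm (A *v hT) * norm (A *v h)" by (rule norm_cauchy_schwarz)
      also have "\<dots> \<le> sqrt (1 + \<delta>) * t * (2 * \<epsilon>)"
        using AhT Ah \<delta> by (intro mult_mono) (auto simp: t_def)
      finally have 1: "(A *v hT) \<bullet> (A *v h) \<le> sqrt (1 + \<delta>) * t * (2 * \<epsilon>)" .
      have 2: "- (\<Sum>j\<in>{1..<s}. (A *v hT) \<bullet> (A *v restr h (Lam j))) \<le> (\<Sum>j\<in>{1..<s}. \<delta> * sqrt 2 * t * norm (restr h (Lam j)))"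
        unfolding sum_negf[symmetric] by (rule sum_mono) (rule cross)
      show ?thesis using 1 2 by linarith
    qed
    also have "\<dots> \<le> sqrt (1 + \<delta>) * t * (2 * \<epsilon>) + \<delta> * sqrt 2 * t * (HAc / f)"
    proof -
      have "(\<Sum>j\<in>{1..<s}. \<delta> * sqrt 2 * t * norm (restr h (Lam j))) = \<delta> * sqrt 2 * t * (\<Sum>j\<in>{1..<s}. norm (restr h (Lam j)))"
        by (simp add: sum_distrib_left)
      moreover have "\<delta> * sqrt 2 * t \<ge> 0" using \<delta> tp by simp
      ultimately show ?thesis using mult_left_mono[OF tail, of "\<delta> * sqrt 2 * t"] by simp
    qed
    finally have "(1 - \<delta>) * t\<^sup>2 \<le> t * (2 * \<epsilon> * sqrt (1 + \<delta>) + sqrt 2 * \<delta> * HAc / f)"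
      using gT(1) by (simp add: algebra_simps)
    then have "t * ((1 - \<delta>) * t) \<le> t * (2 * \<epsilon> * sqrt (1 + \<delta>) + sqrt 2 * \<delta> * HAc / f)"
      by (simp add: power2_eq_square algebra_simps)
    then show ?thesis using tp by (simp add: mult_le_cancel_left_pos)
  qed
  have HA0t: "HA0 \<le> d * t"
    using bnd(3)[OF L0(1) supp_restr, of h] mult_left_mono[OF h0t d0] by (simp add: HA0_def)
  have HAc2: "HAc \<le> r * d * t + r * (1 + \<gamma>) * \<sigma>"
    using cone mult_left_mono[OF HA0t r0] by (simp add: mult.assoc)
  have ht: "\<Delta> * t \<le> 2 * \<epsilon> * sqrt (1 + \<delta>) + sqrt 2 * \<delta> * (r * (1 + \<gamma>)) * \<sigma> / f"
  proof -
    have "sqrt 2 * \<delta> * HAc / f \<le> sqrt 2 * \<delta> * (r * d * t + r * (1 + \<gamma>) * \<sigma>) / f"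
      using HAc2 \<delta> f_pos by (intro divide_right_mono mult_left_mono) auto
    then have "(1 - \<delta>) * t \<le> 2 * \<epsilon> * sqrt (1 + \<delta>) + sqrt 2 * \<delta> * (r * d * t + r * (1 + \<gamma>) * \<sigma>) / f"
      using main1 by linarith
    then show ?thesis unfolding \<Delta>_def by (simp add: algebra_simps add_divide_distrib)
  qed
  have nh: "norm h \<le> t + (r * d * t + r * (1 + \<gamma>) * \<sigma>) / f"
  proof -
    have "norm h = norm (hT + (\<Sum>j\<in>{1..<s}. restr h (Lam j)))" using arg_cong[OF hsplit, of norm] .
    also have "\<dots> \<le> norm hT + norm (\<Sum>j\<in>{1..<s}. restr h (Lam j))" by (rule norm_triangle_ineq)
    also have "\<dots> \<le> t + (\<Sum>j\<in>{1..<s}. norm (restr h (Lam j)))"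
      using norm_sum[of "\<lambda>j. restr h (Lam j)" "{1..<s}"] unfolding t_def by linarith
    also have "\<dots> \<le> t + HAc / f" using tail by simp
    also have "\<dots> \<le> t + (r * d * t + r * (1 + \<gamma>) * \<sigma>) / f"
      using HAc2 f_pos by (simp add: divide_right_mono)
    finally show ?thesis .
  qed
  have NAh: "NA h \<le> (1 + r) * d * t + r * (1 + \<gamma>) * \<sigma>"
  proof -
    have "NA h \<le> HA0 + HAc"
      using normNA(4)[of "restr h L0" "restr h (- L0)"] restr_split[of h L0] by (simp add: HA0_def HAc_def)
    then show ?thesis using HA0t HAc2 by (simp add: algebra_simps)
  qed
  note fin = final_alg[OF f_pos \<Delta>_def Dpos r0 d0 \<gamma>(1) ht nh NAh]
  show ?thesis unfolding Let_def a_def[symmetric] b_def[symmetric] d_def[symmetric]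
    unfolding r_def[symmetric] \<sigma>_def[symmetric] unfolding \<Delta>_def[symmetric]
    using fin unfolding h_def by (intro conjI)
qed


end
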